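(* For every nonreal $z\in\mathbb C$ there exists a nonzero function $v:\Gamma\to\mathbb C$ with $(Jv)(x)=zv(x)$ for all $x\in\Gamma$. Any such $v$ satisfies $v(x)\neq0$ for every $x\in\Gamma$, and $v$ is unique up to a constant multiple.
   Context: Let $\Gamma$ be an infinite connected tree whose vertices are arranged in levels $\ell(x)\in\{0,1,2,\dots\}$: every vertex $x$ is adjacent to exactly one vertex $x'$ with $\ell(x')=\ell(x)+1$; for $\ell(x)\ge 1$ the set $N_x=\{y:\ y'=x\}$ of neighbours of $x$ on level $\ell(x)-1$ is finite and nonempty; $N_x=\emptyset$ if $\ell(x)=0$; there are no other edges. Fix $\lambda_x>0$, $\beta_x\in\mathbb R$. The Jacobi matrix $J$ acts on functions $v:\Gamma\to\mathbb C$ by $(Jv)(x)=\lambda_x v(x')+\beta_x v(x)+\sum_{y\in N_x}\lambda_y v(y)$. *)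

theory Defs
  imports Complex_Main
begin

text \<open>The tree Gamma has vertex set UNIV of type 'a. The level function is lev,
  and par x is the unique neighbour x' of x on level lev x + 1.\<close>

definition children :: "('a \<Rightarrow> 'a) \<Rightarrow> 'a \<Rightarrow> 'a set" where
  "children par x = {y. par y = x}"

definition tree_adj :: "('a \<Rightarrow> 'a) \<Rightarrow> 'a \<Rightarrow> 'a \<Rightarrow> bool" where
  "tree_adj par x y \<longleftrightarrow> y = par x \<or> x = par y"

definition level_tree :: "('a \<Rightarrow> nat) \<Rightarrow> ('a \<Rightarrow> 'a) \<Rightarrow> bool" where
  "level_tree lev par \<longleftrightarrow>
     infinite (UNIV :: 'a set) \<and>
     (\<forall>x. lev (par x) = lev x + 1) \<and>
     (\<forall>x. lev x \<ge> 1 \<longrightarrow> finite (children par x) \<and> children par x \<noteq> {}) \<and>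
     (\<forall>x. lev x = 0 \<longrightarrow> children par x = {}) \<and>
     (\<forall>x y. (tree_adj par)\<^sup>*\<^sup>* x y)"

definition jacobi :: "('a \<Rightarrow> real) \<Rightarrow> ('a \<Rightarrow> real) \<Rightarrow> ('a \<Rightarrow> 'a) \<Rightarrow> ('a \<Rightarrow> complex) \<Rightarrow> 'a \<Rightarrow> complex" where
  "jacobi lam beta par v x =
     complex_of_real (lam x) * v (par x) + complex_of_real (beta x) * v x
     + (\<Sum>y\<in>children par x. complex_of_real (lam y) * v y)"

end

theory Submission
  imports Defs
begin

primrec rr :: "('a \<Rightarrow> real) \<Rightarrow> ('a \<Rightarrow> real) \<Rightarrow> ('a \<Rightarrow> 'a) \<Rightarrow> complex \<Rightarrow> nat \<Rightarrow> 'a \<Rightarrow> complex" where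
  "rr lam beta par z 0 x = complex_of_real (lam x) / (z - complex_of_real (beta x))"
| "rr lam beta par z (Suc n) x = complex_of_real (lam x) / (z - complex_of_real (beta x)
     - (\<Sum>y\<in>children par x. complex_of_real (lam y) * rr lam beta par z n y))"

locale jt =
  fixes lev :: "'a \<Rightarrow> nat" and par :: "'a \<Rightarrow> 'a"
    and lam beta :: "'a \<Rightarrow> real" and z :: complex
  assumes lt: "level_tree lev par" and lp: "\<And>x. lam x > 0" and imz: "Im z \<noteq> 0"
begin

lemma levpar: "lev (par x) = lev x + 1" using lt unfolding level_tree_def by auto
lemma ch0: "lev x = 0 \<Longrightarrow> children par x = {}" using lt unfolding level_tree_def by auto
lemma conn: "(tree_adj par)\<^sup>*\<^sup>* x y" using lt unfolding level_tree_def by auto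

definition r where "r x = rr lam beta par z (lev x) x"
definition S where "S x = (\<Sum>y\<in>children par x. complex_of_real (lam y) * r y)"
definition D where "D x = z - complex_of_real (beta x) - S x"

lemma r_eq: "r x = complex_of_real (lam x) / D x"
proof (cases "lev x")
  case 0
  then show ?thesis by (simp add: r_def D_def S_def ch0)
next
  case (Suc n)
  have "(\<Sum>y\<in>children par x. complex_of_real (lam y) * rr lam beta par z n y) = S x"
    unfolding S_def r_def
  proof (rule sum.cong)
    fix y assume "y \<in> children par x"
    then have "par y = x" by (simp add: children_def)
    then have "lev y = n" using levpar[of y] Suc by simp
    then show "complex_of_real (lam y) * rr lam beta par z n y = complex_of_real (lam y) * rr lam beta par z (lev y) y" by simp
  qed simp
  then show ?thesis using Suc by (simp add: r_def D_def)
qed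

lemma im_neg: "Im z * Im (r x) < 0 \<and> Im z * Im (D x) > 0"
proof (induction "lev x" arbitrary: x rule: less_induct)
  case less
  have ch: "Im z * Im (r y) < 0" if "y \<in> children par x" for y
  proof -
    have "par y = x" using that by (simp add: children_def)
    then have "lev y < lev x" using levpar[of y] by simp
    then show ?thesis using less by blast
  qed
  have imS: "Im (S x) = (\<Sum>y\<in>children par x. lam y * Im (r y))"
    by (simp add: S_def Im_sum)
  have "Im z * Im (S x) = (\<Sum>y\<in>children par x. lam y * (Im z * Im (r y)))"
    by (simp add: imS sum_distrib_left algebra_simps)
  also have "\<dots> \<le> 0"
    by (rule sum_nonpos) (use ch lp in \<open>auto intro: mult_pos_neg less_imp_le\<close>)
  finally have a: "Im z * Im (S x) \<le> 0" .
  have b: "Im z * Im (D x) = (Im z)^2 - Im z * Im (S x)"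
    by (simp add: D_def power2_eq_square algebra_simps)
  have "(Im z)^2 > 0" using imz by simp
  then have dpos: "Im z * Im (D x) > 0" using a b by linarith
  then have "Im (D x) \<noteq> 0" by auto
  then have den: "(Re (D x))^2 + (Im (D x))^2 > 0" by (simp add: sum_power2_gt_zero_iff)
  have "Im (r x) = - lam x * Im (D x) / ((Re (D x))^2 + (Im (D x))^2)"
    by (simp add: r_eq Im_divide power2_eq_square)
  then have "Im z * Im (r x) = - lam x * (Im z * Im (D x)) / ((Re (D x))^2 + (Im (D x))^2)"
    by simp
  also have "\<dots> < 0"
    using lp[of x] dpos den by (intro divide_neg_pos) (auto intro: mult_pos_pos)
  finally show ?case using dpos by simp
qed

lemma D_nz: "D x \<noteq> 0" using im_neg[of x] by auto
lemma r_nz: "r x \<noteq> 0" using im_neg[of x] by auto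

lemma eig_R:
  assumes "\<forall>x. jacobi lam beta par w x = z * w x"
  shows "w x = r x * w (par x)"
proof (induction "lev x" arbitrary: x rule: less_induct)
  case less
  have ch: "w y = r y * w x" if "y \<in> children par x" for y
  proof -
    have "par y = x" using that by (simp add: children_def)
    moreover have "lev y < lev x" using levpar[of y] \<open>par y = x\<close> by simp
    ultimately show ?thesis using less by blast
  qed
  have sx: "(\<Sum>y\<in>children par x. complex_of_real (lam y) * w y) = S x * w x"
    unfolding S_def sum_distrib_right by (rule sum.cong) (auto simp: ch)
  have "jacobi lam beta par w x = z * w x" using assms by blast
  then have "complex_of_real (lam x) * w (par x) + complex_of_real (beta x) * w x + S x * w x = z * w x"
    unfolding jacobi_def sx .
  then have e: "complex_of_real (lam x) * w (par x) = D x * w x"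
    by (simp add: D_def algebra_simps)
  show ?case using D_nz[of x] by (simp add: r_eq e)
qed

lemma R_eig:
  assumes "\<forall>x. w x = r x * w (par x)"
  shows "jacobi lam beta par w x = z * w x"
proof -
  have "(\<Sum>y\<in>children par x. complex_of_real (lam y) * w y) = S x * w x"
    unfolding S_def sum_distrib_right
  proof (rule sum.cong)
    fix y assume "y \<in> children par x"
    then have "par y = x" by (simp add: children_def)
    moreover have "w y = r y * w (par y)" using assms by blast
    ultimately show "complex_of_real (lam y) * w y = complex_of_real (lam y) * r y * w x" by simp
  qed simp
  moreover have "complex_of_real (lam x) * w (par x) = D x * w x"
  proof -
    have "w x = r x * w (par x)" using assms by blast
    then show ?thesis using D_nz[of x] by (simp add: r_eq)
  qed
  ultimately show ?thesis unfolding jacobi_def by (simp add: D_def algebra_simps)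
qed

lemma R_zero:
  assumes "\<forall>x. w x = r x * w (par x)" "w a = 0"
  shows "w b = 0"
proof -
  have "(tree_adj par)\<^sup>*\<^sup>* a b" by (rule conn)
  then show ?thesis
  proof induction
    case base then show ?case using assms(2) by simp
  next
    case (step y y')
    then consider "y' = par y" | "y = par y'" by (auto simp: tree_adj_def)
    then show ?case
    proof cases
      have "w y = r y * w (par y)" using assms(1) by blast
      case 1 then have "r y * w y' = 0" using step \<open>w y = r y * w (par y)\<close> by metis
      then show ?thesis using r_nz[of y] by simp
    next
      have "w y' = r y' * w (par y')" using assms(1) by blast
      case 2 then show ?thesis using step \<open>w y' = r y' * w (par y')\<close> by (metis mult_zero_right)
    qed
  qed
qed

lemma anc: "(tree_adj par)\<^sup>*\<^sup>* x y \<Longrightarrow> \<exists>N M. (par^^N) x = (par^^M) y"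
proof (induction rule: rtranclp_induct)
  case base then show ?case by (metis funpow_0)
next
  case (step y y')
  then obtain N M where nm: "(par^^N) x = (par^^M) y" by blast
  from step consider "y' = par y" | "y = par y'" by (auto simp: tree_adj_def)
  then show ?case
  proof cases
    case 1
    show ?thesis
    proof (cases M)
      case 0
      then have "(par^^Suc N) x = (par^^0) y'" using nm 1 by simp
      then show ?thesis by blast
    next
      case (Suc M')
      then have "(par^^N) x = (par^^M') y'" using nm 1 by (simp add: funpow_swap1)
      then show ?thesis by blast
    qed
  next
    case 2
    then have "(par^^N) x = (par^^Suc M) y'" using nm by (simp add: funpow_swap1)
    then show ?thesis by blast
  qed
qed

lemma lev_pow: "lev ((par^^n) x) = lev x + n"
  by (induction n) (auto simp: levpar)

definition P where "P x n = (\<Prod>k<n. r ((par^^k) x))"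

lemma P_nz: "P x n \<noteq> 0" by (simp add: P_def r_nz)

lemma P_add:
  assumes "(par^^N) x = (par^^M) y"
  shows "P x (N + d) * P y M = P x N * P y (M + d)"
proof (induction d)
  case 0 then show ?case by simp
next
  case (Suc d)
  have "(par^^(N+d)) x = (par^^(M+d)) y"
    using assms by (metis add.commute comp_apply funpow_add)
  then show ?case using Suc by (simp add: P_def algebra_simps)
qed

lemma P_wd:
  assumes "(par^^N) x = (par^^M) y" "(par^^N') x = (par^^M') y"
  shows "P x N / P y M = P x N' / P y M'"
proof -
  have l1: "lev x + N = lev y + M" using lev_pow[of N x] lev_pow[of M y] assms(1) by simp
  have l2: "lev x + N' = lev y + M'" using lev_pow[of N' x] lev_pow[of M' y] assms(2) by simp
  show ?thesis
  proof (cases "N \<le> N'")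
    case True
    then obtain d where d: "N' = N + d" by (metis le_add_diff_inverse)
    then have "M' = M + d" using l1 l2 by simp
    then show ?thesis using P_add[OF assms(1), of d] d P_nz[of y M] P_nz[of y M']
      by (simp add: frac_eq_eq mult.commute)
  next
    case False
    then obtain d where d: "N = N' + d" by (metis le_add_diff_inverse nat_le_linear)
    then have "M = M' + d" using l1 l2 by simp
    then show ?thesis using P_add[OF assms(2), of d] d P_nz[of y M] P_nz[of y M']
      by (simp add: frac_eq_eq mult.commute)
  qed
qed

definition o' where "o' = (undefined :: 'a)"
definition v where "v x = (SOME q. \<exists>N M. (par^^N) x = (par^^M) o' \<and> q = P x N / P o' M)"

lemma v_eq:
  assumes "(par^^N) x = (par^^M) o'"
  shows "v x = P x N / P o' M"
proof -
  have "\<exists>q N M. (par^^N) x = (par^^M) o' \<and> q = P x N / P o' M" using assms by blast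
  then have "\<exists>N M. (par^^N) x = (par^^M) o' \<and> v x = P x N / P o' M"
    unfolding v_def by (rule someI_ex)
  then show ?thesis using P_wd assms by metis
qed

lemma v_R: "v x = r x * v (par x)"
proof -
  obtain N M where nm: "(par^^N) x = (par^^M) o'" using anc[OF conn] by blast
  show ?thesis
  proof (cases N)
    case 0
    then have xo: "x = (par^^M) o'" using nm by simp
    then have "(par^^0) (par x) = (par^^Suc M) o'" by simp
    then have "v (par x) = P (par x) 0 / P o' (Suc M)" by (rule v_eq)
    moreover have "v x = P x 0 / P o' M" using nm 0 v_eq by simp
    moreover have "P o' (Suc M) = P o' M * r x" using xo by (simp add: P_def)
    ultimately have "v (par x) = 1 / (P o' M * r x)" "v x = 1 / P o' M" by (simp_all add: P_def)
    then show ?thesis using r_nz[of x] P_nz[of o' M] by simp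
  next
    case (Suc N')
    then have "(par^^N') (par x) = (par^^M) o'" using nm by (simp add: funpow_swap1)
    then have a: "v (par x) = P (par x) N' / P o' M" by (rule v_eq)
    have b: "v x = P x (Suc N') / P o' M" using nm Suc v_eq by simp
    have "P x (Suc N') = r x * P (par x) N'"
      unfolding P_def prod.lessThan_Suc_shift by (simp add: funpow_Suc_right del: funpow.simps)
    then show ?thesis using a b by simp
  qed
qed

lemma v_o: "v o' = 1"
proof -
  have "v o' = P o' 0 / P o' 0" by (rule v_eq) simp
  then show ?thesis by (simp add: P_def)
qed

end

theorem corollary2:
  fixes lev :: "'a \<Rightarrow> nat" and par :: "'a \<Rightarrow> 'a"
    and lam beta :: "'a \<Rightarrow> real" and z :: complex
  assumes "level_tree lev par"
    and "\<And>x. lam x > 0"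
    and "Im z \<noteq> 0"
  shows "(\<exists>v. v \<noteq> (\<lambda>_. 0) \<and> (\<forall>x. jacobi lam beta par v x = z * v x))
       \<and> (\<forall>v. v \<noteq> (\<lambda>_. 0) \<and> (\<forall>x. jacobi lam beta par v x = z * v x) \<longrightarrow> (\<forall>x. v x \<noteq> 0))
       \<and> (\<forall>v w. v \<noteq> (\<lambda>_. 0) \<and> (\<forall>x. jacobi lam beta par v x = z * v x)
              \<and> (\<forall>x. jacobi lam beta par w x = z * w x) \<longrightarrow> (\<exists>c. w = (\<lambda>x. c * v x)))"
proof -
  interpret jt lev par lam beta z using assms by unfold_locales auto
  have p1: "\<exists>v. v \<noteq> (\<lambda>_. 0) \<and> (\<forall>x. jacobi lam beta par v x = z * v x)"
  proof (intro exI conjI allI)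
    show "v \<noteq> (\<lambda>_. 0)"
    proof
      assume "v = (\<lambda>_. 0)"
      then have "v o' = 0" by simp
      then show False using v_o by simp
    qed
    show "jacobi lam beta par v x = z * v x" for x by (rule R_eig) (use v_R in blast)
  qed
  have p2: "\<forall>x. w x \<noteq> 0" if "w \<noteq> (\<lambda>_. 0)" "\<forall>x. jacobi lam beta par w x = z * w x" for w
  proof (intro allI notI)
    fix x assume "w x = 0"
    have R: "\<forall>x. w x = r x * w (par x)" using eig_R that(2) by blast
    have "w = (\<lambda>_. 0)" by (rule ext) (rule R_zero[OF R \<open>w x = 0\<close>])
    then show False using that(1) by simp
  qed
  have p3: "\<exists>c. w = (\<lambda>x. c * u x)"
    if "u \<noteq> (\<lambda>_. 0)" "\<forall>x. jacobi lam beta par u x = z * u x"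
       "\<forall>x. jacobi lam beta par w x = z * w x" for u w
  proof -
    have Ru: "\<forall>x. u x = r x * u (par x)" using eig_R that(2) by blast
    have Rw: "\<forall>x. w x = r x * w (par x)" using eig_R that(3) by blast
    have uo: "u o' \<noteq> 0" using p2 that(1,2) by blast
    define c where "c = w o' / u o'"
    have R: "\<forall>x. (w x - c * u x) = r x * (w (par x) - c * u (par x))"
    proof
      fix x
      have a: "w x = r x * w (par x)" using Rw by blast
      have b: "u x = r x * u (par x)" using Ru by blast
      show "(w x - c * u x) = r x * (w (par x) - c * u (par x))"
        unfolding a b by (simp add: algebra_simps)
    qed
    have "(w o' - c * u o') = 0" using uo by (simp add: c_def)
    then have "\<forall>x. w x - c * u x = 0" using R_zero[OF R] by blast
    then have "w = (\<lambda>x. c * u x)" by (intro ext) (simp add: eq_iff_diff_eq_0[symmetric])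
    then show ?thesis by (rule exI)
  qed
  show ?thesis
  proof (intro conjI allI impI)
    show "\<exists>v. v \<noteq> (\<lambda>_. 0) \<and> (\<forall>x. jacobi lam beta par v x = z * v x)" by (rule p1)
  next
    fix w x assume "w \<noteq> (\<lambda>_. 0) \<and> (\<forall>x. jacobi lam beta par w x = z * w x)"
    then show "w x \<noteq> 0" using p2 by blast
  next
    fix u w assume "u \<noteq> (\<lambda>_. 0) \<and> (\<forall>x. jacobi lam beta par u x = z * u x)
              \<and> (\<forall>x. jacobi lam beta par w x = z * w x)"
    then show "\<exists>c. w = (\<lambda>x. c * u x)" using p3 by blast
  qed
qed

end
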